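(* Let $T$ be a valid physical transformation of a system of $N$ elementary toy systems that is non-entangling and preserves the amount of information stored in each elementary subsystem, i.e. for every valid epistemic state $E$ and every $i\in\{1,\dots,N\}$ the marginal of $T(E)$ on subsystem $i$ has the same number of ontic states as the marginal of $E$ on subsystem $i$. Then $T$ is local: there exist permutations $T_1,\dots,T_N$ of $\{1,2,3,4\}$ such that $T(o_1,\dots,o_N) = (T_1(o_1),\dots,T_N(o_N))$ for all ontic states.
   Context: In Spekkens' toy theory, ontic states of $N$ elementary systems are elements of $\{1,2,3,4\}^N$, and an epistemic state is a set of ontic states (its ontic basis); only certain epistemic states are valid (those satisfying the knowledge balance principle globally and on all subsystems; equivalently, those equal to the set of ontic states fixed by some toy stabilizer group). The marginal of an epistemic state on subsystem $i$ is its projection onto the $i$-th coordinate. A physical transformation is a map $T$ on ontic states, acting on epistemic states by $T(E) = \{T(o): o\in E\}$; it is valid if it maps valid epistemic states to valid epistemic states, and valid transformations are permutations of the ontic states. A product state with respect to a division of the systems into groups $A_1,\dots,A_k$ is a Cartesian product of valid epistemic states on the groups. A transformation is non-entangling if, for every division into groups $A_1,\dots,A_k$, it maps every product state with respect to that division to a product state with respect to the same division. *)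

theory Defs
  imports "HOL-Library.FuncSet"
begin

text \<open>Elementary systems are indexed by natural numbers; a collection of
  systems is a finite index set I (the N systems of the paper are indexed by
  {..<N}, i.e. 0,...,N-1).\<close>

definition ontic_on :: "nat set \<Rightarrow> (nat \<Rightarrow> nat) set" where
  "ontic_on I = PiE I (\<lambda>_. {1..4})"

text \<open>Single-system toy operators I, X, Z, Y encoded as pairs of booleans
  (x,z): I=(F,F), X=(T,F), Z=(F,T), Y=(T,T). Their values on ontic states:\<close>

fun toy_val1 :: "bool \<times> bool \<Rightarrow> nat \<Rightarrow> int" where
  "toy_val1 (False, False) w = 1"
| "toy_val1 (True, False) w = (if w \<in> {1, 3} then 1 else -1)"
| "toy_val1 (False, True) w = (if w \<in> {1, 2} then 1 else -1)"
| "toy_val1 (True, True) w = (if w \<in> {1, 4} then 1 else -1)"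

text \<open>A toy operator on systems I: a sign and a tensor product of single
  system toy operators (identity outside I).\<close>

type_synonym toy_op = "int \<times> (nat \<Rightarrow> bool \<times> bool)"

definition toy_op_on :: "nat set \<Rightarrow> toy_op \<Rightarrow> bool" where
  "toy_op_on I g \<longleftrightarrow> fst g \<in> {1, -1} \<and> (\<forall>i. i \<notin> I \<longrightarrow> snd g i = (False, False))"

definition toy_id :: toy_op where
  "toy_id = (1, \<lambda>_. (False, False))"

definition toy_minus_id :: toy_op where
  "toy_minus_id = (-1, \<lambda>_. (False, False))"

definition toy_mult :: "toy_op \<Rightarrow> toy_op \<Rightarrow> toy_op" where
  "toy_mult g h = (fst g * fst h,
     \<lambda>i. (fst (snd g i) \<noteq> fst (snd h i), snd (snd g i) \<noteq> snd (snd h i)))"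

text \<open>Commutation: the number of positions at which the two single-system
  operators are distinct and both non-identity is even.\<close>

definition anticomm1 :: "bool \<times> bool \<Rightarrow> bool \<times> bool \<Rightarrow> bool" where
  "anticomm1 p q \<longleftrightarrow> ((fst p \<and> snd q) \<noteq> (snd p \<and> fst q))"

definition toy_commute :: "nat set \<Rightarrow> toy_op \<Rightarrow> toy_op \<Rightarrow> bool" where
  "toy_commute I g h \<longleftrightarrow> even (card {i \<in> I. anticomm1 (snd g i) (snd h i)})"

definition toy_value :: "nat set \<Rightarrow> toy_op \<Rightarrow> (nat \<Rightarrow> nat) \<Rightarrow> int" where
  "toy_value I g w = fst g * (\<Prod>i\<in>I. toy_val1 (snd g i) (w i))"

definition toy_stabilizer_group :: "nat set \<Rightarrow> toy_op set \<Rightarrow> bool" where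
  "toy_stabilizer_group I S \<longleftrightarrow>
     (\<forall>g\<in>S. toy_op_on I g) \<and> toy_id \<in> S \<and>
     (\<forall>g\<in>S. \<forall>h\<in>S. toy_mult g h \<in> S) \<and>
     toy_minus_id \<notin> S \<and>
     (\<forall>g\<in>S. \<forall>h\<in>S. toy_commute I g h)"

definition valid_epi_on :: "nat set \<Rightarrow> (nat \<Rightarrow> nat) set \<Rightarrow> bool" where
  "valid_epi_on I E \<longleftrightarrow>
     (\<exists>S. toy_stabilizer_group I S \<and>
          E = {w \<in> ontic_on I. \<forall>g\<in>S. toy_value I g w = 1})"

abbreviation valid_epi :: "nat \<Rightarrow> (nat \<Rightarrow> nat) set \<Rightarrow> bool" where
  "valid_epi N E \<equiv> valid_epi_on {..<N} E"

definition marginal :: "nat \<Rightarrow> (nat \<Rightarrow> nat) set \<Rightarrow> nat set" where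
  "marginal i E = (\<lambda>w. w i) ` E"

definition valid_transformation :: "nat \<Rightarrow> ((nat \<Rightarrow> nat) \<Rightarrow> (nat \<Rightarrow> nat)) \<Rightarrow> bool" where
  "valid_transformation N T \<longleftrightarrow>
     bij_betw T (ontic_on {..<N}) (ontic_on {..<N}) \<and>
     (\<forall>E. valid_epi N E \<longrightarrow> valid_epi N (T ` E))"

definition division :: "nat \<Rightarrow> nat set set \<Rightarrow> bool" where
  "division N P \<longleftrightarrow> \<Union>P = {..<N} \<and> {} \<notin> P \<and>
     (\<forall>A\<in>P. \<forall>B\<in>P. A \<noteq> B \<longrightarrow> A \<inter> B = {})"

definition product_state :: "nat \<Rightarrow> nat set set \<Rightarrow> (nat \<Rightarrow> nat) set \<Rightarrow> bool" where
  "product_state N P E \<longleftrightarrow>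
     (\<exists>F. (\<forall>A\<in>P. valid_epi_on A (F A)) \<and>
          E = {w \<in> ontic_on {..<N}. \<forall>A\<in>P. restrict w A \<in> F A})"

definition non_entangling :: "nat \<Rightarrow> ((nat \<Rightarrow> nat) \<Rightarrow> (nat \<Rightarrow> nat)) \<Rightarrow> bool" where
  "non_entangling N T \<longleftrightarrow>
     (\<forall>P. division N P \<longrightarrow>
        (\<forall>E. product_state N P E \<longrightarrow> product_state N P (T ` E)))"

end

theory Submission
  imports Defs
begin

lemma ontic_onD: "w \<in> ontic_on I \<Longrightarrow> i \<in> I \<Longrightarrow> w i \<in> {1..4}"
  by (auto simp: ontic_on_def)

lemma ontic_on_upd: "w \<in> ontic_on I \<Longrightarrow> j \<in> I \<Longrightarrow> x \<in> {1..4} \<Longrightarrow> w(j:=x) \<in> ontic_on I"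
  unfolding ontic_on_def by (auto simp: PiE_iff extensional_def)

lemma ontic_on_ext: "w \<in> ontic_on I \<Longrightarrow> x \<notin> I \<Longrightarrow> w x = undefined"
  unfolding ontic_on_def by (auto simp: PiE_iff extensional_def)

lemma restrict_ontic: "w \<in> ontic_on I \<Longrightarrow> J \<subseteq> I \<Longrightarrow> restrict w J \<in> ontic_on J"
  unfolding ontic_on_def by (auto simp: PiE_iff)

lemma toy_value_single:
  assumes "finite I" "i \<in> I"
  shows "toy_value I (s, \<lambda>j. if j = i then op else (False,False)) w = s * toy_val1 op (w i)"
proof -
  have "(\<Prod>j\<in>I. toy_val1 (if j = i then op else (False,False)) (w j))
        = (\<Prod>j\<in>I. if j = i then toy_val1 op (w j) else 1)"
    by (rule prod.cong) auto
  also have "\<dots> = toy_val1 op (w i)" using assms by (simp add: prod.delta)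
  finally show ?thesis by (simp add: toy_value_def)
qed

lemma toy_value_id: "toy_value I toy_id w = 1"
  by (simp add: toy_value_def toy_id_def)

lemma anticomm1_self: "\<not> anticomm1 p p"
  by (auto simp: anticomm1_def)

lemma anticomm1_id: "\<not> anticomm1 (False,False) p" "\<not> anticomm1 p (False,False)"
  by (auto simp: anticomm1_def)

lemma single_site_valid:
  assumes "finite I" "i \<in> I" "op \<noteq> (False,False)" "s \<in> {1,-1}"
  shows "valid_epi_on I {w \<in> ontic_on I. s * toy_val1 op (w i) = 1}"
proof -
  define g where "g = ((s, \<lambda>j. if j = i then op else (False,False)) :: toy_op)"
  have sq: "s*s = 1" using assms(4) by auto
  have gg: "toy_mult g g = toy_id"
    by (simp add: g_def toy_mult_def toy_id_def sq fun_eq_iff)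
  have ig: "toy_mult toy_id g = g" "toy_mult g toy_id = g" "toy_mult toy_id toy_id = toy_id"
    by (auto simp: g_def toy_mult_def toy_id_def fun_eq_iff prod_eq_iff)
  have "g \<noteq> toy_minus_id"
  proof
    assume "g = toy_minus_id"
    then have "snd g i = snd toy_minus_id i" by simp
    then show False using assms(3) by (simp add: g_def toy_minus_id_def)
  qed
  then have nm: "toy_minus_id \<notin> {toy_id, g}" by (auto simp: toy_minus_id_def toy_id_def)
  have comm: "\<forall>a\<in>{toy_id,g}. \<forall>b\<in>{toy_id,g}. toy_commute I a b"
    by (auto simp: toy_commute_def g_def toy_id_def anticomm1_self anticomm1_id)
  have on: "\<forall>h\<in>{toy_id,g}. toy_op_on I h"
    using assms(2,4) by (auto simp: toy_op_on_def g_def toy_id_def)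
  have stab: "toy_stabilizer_group I {toy_id, g}"
    unfolding toy_stabilizer_group_def
  proof (intro conjI)
    show "toy_id \<in> {toy_id, g}" by simp
    show "\<forall>a\<in>{toy_id,g}. \<forall>b\<in>{toy_id,g}. toy_mult a b \<in> {toy_id,g}"
      using gg ig by simp
  qed (fact on nm comm)+
  have "{w \<in> ontic_on I. s * toy_val1 op (w i) = 1}
      = {w \<in> ontic_on I. \<forall>h\<in>{toy_id,g}. toy_value I h w = 1}"
    using toy_value_single[OF assms(1,2)] by (auto simp: g_def toy_value_id)
  thus ?thesis using stab unfolding valid_epi_on_def by blast
qed

lemma full_valid: "valid_epi_on I (ontic_on I)"
proof -
  have stab: "toy_stabilizer_group I {toy_id}"
    by (auto simp: toy_stabilizer_group_def toy_op_on_def toy_id_def toy_mult_def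
        toy_minus_id_def toy_commute_def anticomm1_id)
  have "ontic_on I = {w \<in> ontic_on I. \<forall>h\<in>{toy_id}. toy_value I h w = 1}"
    by (auto simp: toy_value_id)
  thus ?thesis using stab unfolding valid_epi_on_def by blast
qed

lemma four: "x \<in> {1..4::nat} \<Longrightarrow> x=1 \<or> x=2 \<or> x=3 \<or> x=4" by auto

lemma pair_op_ab:
  assumes A: "a=1 \<or> a=2 \<or> a=3 \<or> a=4" and B: "b=1 \<or> b=2 \<or> b=3 \<or> (b::nat)=4" and ab: "a \<noteq> b"
  shows "\<exists>op\<in>{(True,False),(False,True),(True,True)}. \<exists>s\<in>{1,-1::int}.
           \<forall>x\<in>{1,2,3,4::nat}. (s * toy_val1 op x = 1) = (x \<in> {a,b})"
proof -
  { assume "a = 1" "b = 2" then have ?thesis by simp }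
  note c12 = this
  { assume "a = 1" "b = 3" then have ?thesis by simp }
  note c13 = this
  { assume "a = 1" "b = 4" then have ?thesis by simp }
  note c14 = this
  { assume "a = 2" "b = 1" then have ?thesis by simp }
  note c21 = this
  { assume "a = 2" "b = 3" then have ?thesis by simp }
  note c23 = this
  { assume "a = 2" "b = 4" then have ?thesis by simp }
  note c24 = this
  { assume "a = 3" "b = 1" then have ?thesis by simp }
  note c31 = this
  { assume "a = 3" "b = 2" then have ?thesis by simp }
  note c32 = this
  { assume "a = 3" "b = 4" then have ?thesis by simp }
  note c34 = this
  { assume "a = 4" "b = 1" then have ?thesis by simp }
  note c41 = this
  { assume "a = 4" "b = 2" then have ?thesis by simp }
  note c42 = this
  { assume "a = 4" "b = 3" then have ?thesis by simp }
  note c43 = this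
  show ?thesis using A B ab c12 c13 c14 c21 c23 c24 c31 c32 c34 c41 c42 c43 by blast
qed

lemma pair_op:
  assumes "card p = 2" "p \<subseteq> {1..4::nat}"
  shows "\<exists>op\<in>{(True,False),(False,True),(True,True)}. \<exists>s\<in>{1,-1::int}.
           \<forall>x\<in>{1,2,3,4::nat}. (s * toy_val1 op x = 1) = (x \<in> p)"
proof -
  obtain a b where p: "p = {a,b}" "a \<noteq> b" using assms(1) by (meson card_2_iff)
  have "a \<in> {1..4}" "b \<in> {1..4}" using assms p by auto
  then have A: "a=1 \<or> a=2 \<or> a=3 \<or> a=4" and B: "b=1 \<or> b=2 \<or> b=3 \<or> b=4" using four by blast+
  show ?thesis unfolding p(1) using pair_op_ab[OF A B p(2)] .
qed

lemma cyl_valid_on: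
  assumes "finite A" "i \<in> A" "card p = 2" "p \<subseteq> {1..4}"
  shows "valid_epi_on A {w \<in> ontic_on A. w i \<in> p}"
proof -
  obtain op s where os: "op \<in> {(True,False),(False,True),(True,True)}" "s \<in> {1,-1::int}"
     "\<forall>x\<in>{1,2,3,4::nat}. (s * toy_val1 op x = 1) = (x \<in> p)"
    using pair_op[OF assms(3,4)] by blast
  have e: "{w \<in> ontic_on A. w i \<in> p} = {w \<in> ontic_on A. s * toy_val1 op (w i) = 1}"
  proof -
    have "w i \<in> {1,2,3,4}" if "w \<in> ontic_on A" for w
      using ontic_onD[OF that assms(2)] by auto
    then show ?thesis using os(3) by blast
  qed
  have "op \<noteq> (False,False)" using os(1) by auto
  then show ?thesis unfolding e using single_site_valid[OF assms(1,2)] os(2) by blast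
qed

lemma cyl_product:
  assumes "i < N" "card p = 2" "p \<subseteq> {1..4}"
  shows "product_state N ((\<lambda>j. {j}) ` {..<N}) {w \<in> ontic_on {..<N}. w i \<in> p}"
proof -
  define F where "F A = (if i \<in> A then {w \<in> ontic_on A. w i \<in> p} else ontic_on A)" for A
  have v: "\<forall>A\<in>(\<lambda>j. {j}) ` {..<N}. valid_epi_on A (F A)"
    using cyl_valid_on assms full_valid by (auto simp: F_def)
  have "{w \<in> ontic_on {..<N}. w i \<in> p}
     = {w \<in> ontic_on {..<N}. \<forall>A\<in>(\<lambda>j. {j}) ` {..<N}. restrict w A \<in> F A}"
  proof (intro equalityI subsetI)
    fix w assume "w \<in> {w \<in> ontic_on {..<N}. w i \<in> p}"
    then have w: "w \<in> ontic_on {..<N}" "w i \<in> p" by auto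
    show "w \<in> {w \<in> ontic_on {..<N}. \<forall>A\<in>(\<lambda>j. {j}) ` {..<N}. restrict w A \<in> F A}"
      using w restrict_ontic[OF w(1)] by (auto simp: F_def)
  next
    fix w assume "w \<in> {w \<in> ontic_on {..<N}. \<forall>A\<in>(\<lambda>j. {j}) ` {..<N}. restrict w A \<in> F A}"
    then have w: "w \<in> ontic_on {..<N}" "restrict w {i} \<in> F {i}" using assms(1) by auto
    then show "w \<in> {w \<in> ontic_on {..<N}. w i \<in> p}" by (auto simp: F_def)
  qed
  then show ?thesis unfolding product_state_def using v by blast
qed

lemma finest_product:
  assumes "product_state N ((\<lambda>j. {j}) ` {..<N}) D"
  shows "\<exists>G. (\<forall>j<N. G j \<subseteq> {1..4}) \<and> D = {v \<in> ontic_on {..<N}. \<forall>j<N. v j \<in> G j}"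
proof -
  obtain F where F: "\<forall>A\<in>(\<lambda>j. {j}) ` {..<N}. valid_epi_on A (F A)"
    and D: "D = {w \<in> ontic_on {..<N}. \<forall>A\<in>(\<lambda>j. {j}) ` {..<N}. restrict w A \<in> F A}"
    using assms by (auto simp: product_state_def)
  have sub: "F {j} \<subseteq> ontic_on {j}" if "j<N" for j using F that by (auto simp: valid_epi_on_def)
  define G where "G j = (\<lambda>f. f j) ` F {j}" for j
  have G1: "\<forall>j<N. G j \<subseteq> {1..4}" using sub by (force simp: G_def ontic_on_def)
  have eq: "restrict v {j} \<in> F {j} \<longleftrightarrow> v j \<in> G j" if "j<N" for v j
  proof
    assume "restrict v {j} \<in> F {j}" then show "v j \<in> G j" unfolding G_def
      by (metis (no_types, lifting) image_eqI restrict_apply' singletonI)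
  next
    assume "v j \<in> G j" then obtain f where f: "f \<in> F {j}" "f j = v j" by (auto simp: G_def)
    then have "f \<in> ontic_on {j}" using sub that by auto
    then have "f = restrict v {j}" using f(2)
      by (auto simp: ontic_on_def PiE_iff extensional_def fun_eq_iff)
    then show "restrict v {j} \<in> F {j}" using f by simp
  qed
  have "(\<forall>A\<in>(\<lambda>j. {j}) ` {..<N}. restrict w A \<in> F A) \<longleftrightarrow> (\<forall>j<N. w j \<in> G j)" for w
    using eq by auto
  then show ?thesis using G1 D by auto
qed

lemma marginal_box:
  assumes "D = {v \<in> ontic_on {..<N}. \<forall>j<N. v j \<in> G j}" "D \<noteq> {}"
    "\<forall>j<N. G j \<subseteq> {1..4}" "j < N"
  shows "marginal j D = G j"
proof (intro equalityI subsetI)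
  fix x assume "x \<in> marginal j D" then show "x \<in> G j"
    using assms(1,4) by (auto simp: marginal_def)
next
  fix x assume x: "x \<in> G j"
  obtain v where v: "v \<in> D" using assms(2) by blast
  have x4: "x \<in> {1..4}" using x assms(3,4) by blast
  have "v(j:=x) \<in> ontic_on {..<N}" using v assms(1,4) ontic_on_upd[of v "{..<N}" j x] x4 by auto
  then have "v(j:=x) \<in> D" using v x assms(1) by auto
  then show "x \<in> marginal j D" unfolding marginal_def by (metis fun_upd_same image_eqI)
qed

lemma marginal_cyl:
  assumes "i < N" "j < N" "p \<subseteq> {1..4}" "a \<in> p"
  shows "marginal j {w \<in> ontic_on {..<N}. w i \<in> p} = (if j = i then p else {1..4})"
proof -
  define G where "G k = (if k = i then p else {1..4::nat})" for k
  have box: "{w \<in> ontic_on {..<N}. w i \<in> p} = {v \<in> ontic_on {..<N}. \<forall>k<N. v k \<in> G k}"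
    using assms(1) ontic_onD[of _ "{..<N}"] by (auto simp: G_def)
  define w0 where "w0 = (\<lambda>j\<in>{..<N}. 1::nat)"
  have w0: "w0 \<in> ontic_on {..<N}" by (auto simp: w0_def ontic_on_def)
  have "w0(i:=a) \<in> {w \<in> ontic_on {..<N}. w i \<in> p}"
    using ontic_on_upd[OF w0, of i a] assms by auto
  then have ne: "{w \<in> ontic_on {..<N}. w i \<in> p} \<noteq> {}" by blast
  have "\<forall>k<N. G k \<subseteq> {1..4}" using assms(3) by (auto simp: G_def)
  from marginal_box[OF box ne this assms(2)] show ?thesis by (simp add: G_def)
qed

lemma key:
  assumes vt: "valid_transformation N T"
    and nent: "non_entangling N T"
    and marg: "\<forall>E i. valid_epi N E \<longrightarrow> i < N \<longrightarrow>
           card (marginal i (T ` E)) = card (marginal i E)"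
    and i: "i < N" and w: "w \<in> ontic_on {..<N}" and w': "w' \<in> ontic_on {..<N}"
    and eqa: "w i = w' i"
  shows "T w i = T w' i"
proof (rule ccontr)
  assume neq: "T w i \<noteq> T w' i"
  let ?O = "ontic_on {..<N}"
  define P0 where "P0 = (\<lambda>j. {j}) ` {..<N}"
  have div: "division N P0" unfolding division_def P0_def by auto
  have ne: "\<forall>E. product_state N P0 E \<longrightarrow> product_state N P0 (T ` E)"
    using nent div unfolding non_entangling_def by blast
  have bij: "bij_betw T ?O ?O" using vt by (simp add: valid_transformation_def)
  define a where "a = w i"
  have a4: "a \<in> {1..4}" using ontic_onD[OF w] i a_def by auto
  define b where "b = (if a = 1 then 2 else (1::nat))"
  define c where "c = (if a \<le> 2 then 3 else (2::nat))"
  have abc: "b \<in> {1..4}" "c \<in> {1..4}" "b \<noteq> a" "c \<noteq> a" "b \<noteq> c"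
    using a4 by (auto simp: b_def c_def)
  define Cyl where "Cyl r = {w \<in> ?O. w i \<in> r}" for r
  have X: "\<exists>G. T ` Cyl r = {v \<in> ?O. \<forall>j<N. v j \<in> G j} \<and> G i = {T w i, T w' i}
             \<and> (\<forall>j<N. j \<noteq> i \<longrightarrow> G j = {1..4})"
    if r: "card r = 2" "r \<subseteq> {1..4}" "a \<in> r" for r
  proof -
    have cv: "valid_epi N (Cyl r)" unfolding Cyl_def
      using cyl_valid_on[of "{..<N}" i r] r i by auto
    have cp: "product_state N P0 (Cyl r)" unfolding Cyl_def P0_def
      using cyl_product[OF i r(1,2)] .
    obtain G where G: "\<forall>j<N. G j \<subseteq> {1..4}" "T ` Cyl r = {v \<in> ?O. \<forall>j<N. v j \<in> G j}"
    proof -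
      have "product_state N P0 (T ` Cyl r)" using ne cp by blast
      then show ?thesis using that finest_product[of N "T ` Cyl r"] unfolding P0_def by blast
    qed
    have wc: "w \<in> Cyl r" "w' \<in> Cyl r" using w w' r eqa by (auto simp: Cyl_def a_def)
    then have nemp: "T ` Cyl r \<noteq> {}" by blast
    have mg: "marginal j (T ` Cyl r) = G j" if "j < N" for j
      using marginal_box[OF G(2) nemp G(1) that] .
    have cd: "card (G j) = card (if j = i then r else {1..4})" if "j < N" for j
    proof -
      have "card (marginal j (T ` Cyl r)) = card (marginal j (Cyl r))" using marg cv that by blast
      then show ?thesis using mg[OF that] marginal_cyl[OF i that r(2,3)] unfolding Cyl_def by simp
    qed
    have in1: "T w i \<in> G i" "T w' i \<in> G i" using wc G(2) i by auto
    have "card (G i) = 2" using cd[OF i] r by simp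
    then have Gi: "G i = {T w i, T w' i}" using in1 neq
      by (metis card_2_iff doubleton_eq_iff insertE singletonD)
    have "G j = {1..4}" if "j < N" "j \<noteq> i" for j
    proof -
      have "card (G j) = card {1..4::nat}" using cd[OF that(1)] that by simp
      then show ?thesis using G(1) that card_subset_eq[of "{1..4::nat}" "G j"] by auto
    qed
    then show ?thesis using G(2) Gi by blast
  qed
  have pr: "card {a,b} = 2" "{a,b} \<subseteq> {1..4}" "a \<in> {a,b}" using abc a4 by auto
  have qr: "card {a,c} = 2" "{a,c} \<subseteq> {1..4}" "a \<in> {a,c}" using abc a4 by auto
  obtain Gp where Gp: "T ` Cyl {a,b} = {v \<in> ?O. \<forall>j<N. v j \<in> Gp j}" "Gp i = {T w i, T w' i}"
             "\<forall>j<N. j \<noteq> i \<longrightarrow> Gp j = {1..4}" using X[OF pr] by blast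
  obtain Gq where Gq: "T ` Cyl {a,c} = {v \<in> ?O. \<forall>j<N. v j \<in> Gq j}" "Gq i = {T w i, T w' i}"
             "\<forall>j<N. j \<noteq> i \<longrightarrow> Gq j = {1..4}" using X[OF qr] by blast
  have "Gp j = Gq j" if "j < N" for j
    using Gp(2,3) Gq(2,3) that by (cases "j = i") simp_all
  then have "T ` Cyl {a,b} = T ` Cyl {a,c}" unfolding Gp(1) Gq(1) by auto
  moreover have "inj_on T ?O" using bij by (simp add: bij_betw_def)
  moreover have "Cyl {a,b} \<subseteq> ?O" "Cyl {a,c} \<subseteq> ?O" by (auto simp: Cyl_def)
  ultimately have "Cyl {a,b} = Cyl {a,c}" using inj_on_image_eq_iff[of T ?O] by blast
  then have "marginal i (Cyl {a,b}) = marginal i (Cyl {a,c})" by simp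
  then have "{a,b} = {a,c}" using marginal_cyl[OF i i pr(2,3)] marginal_cyl[OF i i qr(2,3)]
    unfolding Cyl_def by simp
  then show False using abc by (metis doubleton_eq_iff)
qed

theorem mainTheorem9:
  fixes N :: nat and T :: "(nat \<Rightarrow> nat) \<Rightarrow> (nat \<Rightarrow> nat)"
  assumes "valid_transformation N T"
    and "non_entangling N T"
    and "\<forall>E i. valid_epi N E \<longrightarrow> i < N \<longrightarrow>
           card (marginal i (T ` E)) = card (marginal i E)"
  shows "\<exists>Ts :: nat \<Rightarrow> nat \<Rightarrow> nat.
           (\<forall>i<N. bij_betw (Ts i) {1..4} {1..4}) \<and>
           (\<forall>w\<in>ontic_on {..<N}. T w = (\<lambda>i\<in>{..<N}. Ts i (w i)))"
proof -
  let ?O = "ontic_on {..<N}"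
  have bij: "bij_betw T ?O ?O" using assms(1) by (simp add: valid_transformation_def)
  define w0 where "w0 = (\<lambda>j\<in>{..<N}. 1::nat)"
  have w0: "w0 \<in> ?O" by (auto simp: w0_def ontic_on_def)
  define Ts where "Ts i a = T (w0(i:=a)) i" for i a
  have loc: "T w k = Ts k (w k)" if "w \<in> ?O" "k < N" for w k
  proof -
    have "w0(k := w k) \<in> ?O" using ontic_on_upd[OF w0, of k "w k"] ontic_onD[OF that(1)] that(2) by auto
    then show ?thesis unfolding Ts_def using key[OF assms that(2) that(1)] by simp
  qed
  have A: "\<forall>w\<in>?O. T w = (\<lambda>i\<in>{..<N}. Ts i (w i))"
  proof
    fix w assume w: "w \<in> ?O"
    have Tw: "T w \<in> ?O" using bij w by (auto simp: bij_betw_def)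
    show "T w = (\<lambda>i\<in>{..<N}. Ts i (w i))"
    proof
      fix x show "T w x = (\<lambda>i\<in>{..<N}. Ts i (w i)) x"
        using loc[OF w] ontic_on_ext[OF Tw] by (cases "x < N") auto
    qed
  qed
  have B: "bij_betw (Ts i) {1..4} {1..4}" if i: "i < N" for i
  proof -
    have im: "Ts i ` {1..4} = {1..4}"
    proof (intro equalityI subsetI)
      fix y assume "y \<in> Ts i ` {1..4}"
      then obtain x where x: "x \<in> {1..4}" "y = Ts i x" by auto
      have "w0(i:=x) \<in> ?O" using ontic_on_upd[OF w0, of i x] x i by auto
      then have "T (w0(i:=x)) \<in> ?O" using bij by (auto simp: bij_betw_def)
      then show "y \<in> {1..4}" using x i ontic_onD unfolding Ts_def by auto
    next
      fix y :: nat assume y: "y \<in> {1..4}"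
      have "w0(i:=y) \<in> ?O" using ontic_on_upd[OF w0, of i y] y i by auto
      then obtain u where u: "u \<in> ?O" "T u = w0(i:=y)" using bij
        by (metis bij_betw_imp_surj_on imageE)
      have "Ts i (u i) = y" using loc[OF u(1) i] u(2) by simp
      moreover have "u i \<in> {1..4}" using ontic_onD[OF u(1)] i by auto
      ultimately show "y \<in> Ts i ` {1..4}" by (metis imageI)
    qed
    then have "inj_on (Ts i) {1..4}" by (intro eq_card_imp_inj_on) auto
    then show ?thesis using im by (simp add: bij_betw_def)
  qed
  show ?thesis using A B by blast
qed

end
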